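(* Let $G=(\mathfrak{N},\mathfrak{T},\mathfrak{R},\mathfrak{S})$ be a context-free grammar, $\Sigma$ a set of characters, $(\textsl{Lex},\textsl{Sel})$ a local lexing and $D\in\Sigma^*$. For $k\in\{0,\ldots,|D|\}$ let $\mathcal{Z}_k^\infty=\bigcup_{u\ge0}\mathcal{Z}_k^u$. Then for every token sequence $p$: $p\in\mathfrak{P}$ if and only if (a) for all $0\le i<|p|$, $p_i\in\mathcal{Z}_{|\overline{p_0\ldots p_{i-1}}|}^{\infty}$, and (b) $[p]\in\mathcal{L}_{\text{prefix}}$.
   Context: Notation: for a set $U$, $U^*$ is the set of finite sequences over $U$, $\varepsilon$ the empty sequence, juxtaposition is concatenation, $|\alpha|$ the length and $\alpha_i$ ($0\le i<|\alpha|$) the $i$-th element. A context-free grammar $(\mathfrak{N},\mathfrak{T},\mathfrak{R},\mathfrak{S})$ has disjoint nonterminals $\mathfrak{N}$ and terminals $\mathfrak{T}$, rules $\mathfrak{R}\subseteq\mathfrak{N}\times(\mathfrak{N}\cup\mathfrak{T})^*$ (written $N\rightarrow\alpha$), start symbol $\mathfrak{S}$; $\overset{*}{\Rightarrow}$ is the reflexive-transitive closure of one-step rewriting by rules. $\mathcal{L}_{\text{prefix}}=\{w\in\mathfrak{T}^*\mid\exists\alpha\in(\mathfrak{N}\cup\mathfrak{T})^*.\ \mathfrak{S}\overset{*}{\Rightarrow}w\alpha\}$. Tokens: a token is a pair $x=(t,c)\in\mathfrak{T}\times\Sigma^*$; $[x]=t$, $\overline{x}=c$. For a token sequence (path) $q=x_0\ldots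 x_r$, $[q]=[x_0]\ldots[x_r]$ and $\overline{q}=\overline{x_0}\ldots\overline{x_r}$ (for $i=0$, $\overline{p_0\ldots p_{i-1}}$ is the empty sequence). Local lexing: a pair $(\textsl{Lex},\textsl{Sel})$ where $\textsl{Lex}$ assigns to each $t\in\mathfrak{T}$ a function $\textsl{Lex}(t)$ which, given $D\in\Sigma^*$ and $k\in\{0,\ldots,|D|\}$, returns a set of tokens $(t,c)$ with $k+|c|\le|D|$ and $c_i=D_{k+i}$ for $0\le i\le|c|-1$; and $\textsl{Sel}$ maps any two token sets $A\subseteq B$ to a token set with $A\subseteq\textsl{Sel}(A,B)\subseteq B$. Path sets: $\operatorname{limit} f\,X=\bigcup_{n\ge0}f^n(X)$. $\operatorname{Append}_k\,T\,P=P\cup\{pt\mid p\in P,\ |\overline{p}|=k,\ t\in T,\ [pt]\in\mathcal{L}_{\text{prefix}}\}$. For $k\in\{0,\ldots,|D|\}$: $\mathcal{X}_k=\{x\in\mathfrak{T}\times\Sigma^*\mid x\in\textsl{Lex}([x])(D,k)\}$; $\mathcal{P}_0^0=\{\varepsilon\}$; $\mathcal{W}_k^u=\{x\in\mathcal{X}_k\mid\exists p\in\mathcal{P}_k^u.\ |\overline{p}|=k\wedge[px]\in\mathcal{L}_{\text{prefix}}\}$; $\mathcal{Z}_k^0=\emptyset$; $\mathcal{Z}_k^{u+1}=\textsl{Sel}(\mathcal{Z}_k^u,\mathcal{W}_k^u)$; $\mathcal{P}_k^{u+1}=\operatorname{limit}(\operatorname{Append}_k\,\mathcal{Z}_k^{u+1})\,\mathcal{P}_k^u$;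 $\mathcal{P}_k^\infty=\bigcup_u\mathcal{P}_k^u$; $\mathcal{P}_{k+1}^0=\mathcal{P}_k^\infty$. Finally $\mathfrak{P}=\mathcal{P}_{|D|}^\infty$. *)

theory Defs
  imports Main
begin

text \<open>Symbols: nonterminals are Inl, terminals are Inr (so the two sets are disjoint).\<close>
type_synonym ('n, 't) symbol = "'n + 't"
type_synonym ('n, 't) rule = "'n \<times> ('n, 't) symbol list"

definition wf_grammar ::
  "'n set \<Rightarrow> 't set \<Rightarrow> ('n, 't) rule set \<Rightarrow> 'n \<Rightarrow> bool" where
  "wf_grammar \<NN> \<TT> \<RR> \<SS> \<longleftrightarrow>
     \<RR> \<subseteq> \<NN> \<times> lists (Inl ` \<NN> \<union> Inr ` \<TT>) \<and> \<SS> \<in> \<NN>"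

definition derives1 :: "('n, 't) rule set \<Rightarrow> ('n, 't) symbol list \<Rightarrow> ('n, 't) symbol list \<Rightarrow> bool" where
  "derives1 \<RR> u v \<longleftrightarrow>
     (\<exists>\<alpha> \<beta> N \<gamma>. u = \<alpha> @ [Inl N] @ \<beta> \<and> v = \<alpha> @ \<gamma> @ \<beta> \<and> (N, \<gamma>) \<in> \<RR>)"

definition derives :: "('n, 't) rule set \<Rightarrow> ('n, 't) symbol list \<Rightarrow> ('n, 't) symbol list \<Rightarrow> bool" where
  "derives \<RR> = (derives1 \<RR>)\<^sup>*\<^sup>*"

definition L_prefix :: "'t set \<Rightarrow> ('n, 't) rule set \<Rightarrow> 'n \<Rightarrow> 't list set" where
  "L_prefix \<TT> \<RR> \<SS> =
     {w. w \<in> lists \<TT> \<and> (\<exists>\<alpha>. derives \<RR> [Inl \<SS>] (map Inr w @ \<alpha>))}"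

type_synonym ('t, 'c) token = "'t \<times> 'c list"
type_synonym ('t, 'c) path = "('t, 'c) token list"

definition terms :: "('t, 'c) path \<Rightarrow> 't list" where
  "terms p = map fst p"

definition chars :: "('t, 'c) path \<Rightarrow> 'c list" where
  "chars p = concat (map snd p)"

type_synonym ('t, 'c) lexer = "'t \<Rightarrow> 'c list \<Rightarrow> nat \<Rightarrow> ('t, 'c) token set"
type_synonym ('t, 'c) selector = "('t, 'c) token set \<Rightarrow> ('t, 'c) token set \<Rightarrow> ('t, 'c) token set"

definition is_lexer :: "'t set \<Rightarrow> 'c set \<Rightarrow> ('t, 'c) lexer \<Rightarrow> bool" where
  "is_lexer \<TT> \<Sigma> Lex \<longleftrightarrow>
     (\<forall>t\<in>\<TT>. \<forall>D\<in>lists \<Sigma>. \<forall>k\<le>length D. \<forall>x\<in>Lex t D k.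
        fst x = t \<and> k + length (snd x) \<le> length D \<and>
        (\<forall>i<length (snd x). snd x ! i = D ! (k + i)))"

definition is_selector :: "'t set \<Rightarrow> 'c set \<Rightarrow> ('t, 'c) selector \<Rightarrow> bool" where
  "is_selector \<TT> \<Sigma> Sel \<longleftrightarrow>
     (\<forall>A B. B \<subseteq> \<TT> \<times> lists \<Sigma> \<longrightarrow> A \<subseteq> B \<longrightarrow> A \<subseteq> Sel A B \<and> Sel A B \<subseteq> B)"

definition local_lexing :: "'t set \<Rightarrow> 'c set \<Rightarrow> ('t, 'c) lexer \<Rightarrow> ('t, 'c) selector \<Rightarrow> bool" where
  "local_lexing \<TT> \<Sigma> Lex Sel \<longleftrightarrow> is_lexer \<TT> \<Sigma> Lex \<and> is_selector \<TT> \<Sigma> Sel"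

definition limit :: "('a set \<Rightarrow> 'a set) \<Rightarrow> 'a set \<Rightarrow> 'a set" where
  "limit f X = (\<Union>n. (f ^^ n) X)"

definition Append :: "'t list set \<Rightarrow> nat \<Rightarrow> ('t, 'c) token set \<Rightarrow> ('t, 'c) path set \<Rightarrow> ('t, 'c) path set" where
  "Append Lp k Tk P =
     P \<union> {p @ [t] | p t. p \<in> P \<and> length (chars p) = k \<and> t \<in> Tk \<and> terms (p @ [t]) \<in> Lp}"

text \<open>The tokens \<open>X_k\<close>; empty for \<open>k > |D|\<close>, where \<open>X_k\<close> is not defined in the paper.\<close>
definition Xk :: "'t set \<Rightarrow> 'c set \<Rightarrow> ('t, 'c) lexer \<Rightarrow> 'c list \<Rightarrow> nat \<Rightarrow> ('t, 'c) token set" where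
  "Xk \<TT> \<Sigma> Lex D k =
     {x. x \<in> \<TT> \<times> lists \<Sigma> \<and> k \<le> length D \<and> x \<in> Lex (fst x) D k}"

definition Wk :: "'t list set \<Rightarrow> ('t, 'c) token set \<Rightarrow> nat \<Rightarrow> ('t, 'c) path set \<Rightarrow> ('t, 'c) token set" where
  "Wk Lp X k P = {x \<in> X. \<exists>p\<in>P. length (chars p) = k \<and> terms (p @ [x]) \<in> Lp}"

text \<open>One round at position k: from \<open>(P_k^u, Z_k^u)\<close> to \<open>(P_k^{u+1}, Z_k^{u+1})\<close>,
  where \<open>Z_k^{u+1} = Sel(Z_k^u, W_k^u)\<close> and \<open>P_k^{u+1} = limit (Append_k Z_k^{u+1}) P_k^u\<close>.\<close>
definition step :: "'t list set \<Rightarrow> (nat \<Rightarrow> ('t, 'c) token set) \<Rightarrow> ('t, 'c) selector \<Rightarrow> nat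
    \<Rightarrow> ('t, 'c) path set \<times> ('t, 'c) token set \<Rightarrow> ('t, 'c) path set \<times> ('t, 'c) token set" where
  "step Lp X Sel k PZ =
     (let Z' = Sel (snd PZ) (Wk Lp (X k) k (fst PZ))
      in (limit (Append Lp k Z') (fst PZ), Z'))"

primrec P0 :: "'t list set \<Rightarrow> (nat \<Rightarrow> ('t, 'c) token set) \<Rightarrow> ('t, 'c) selector \<Rightarrow> nat
    \<Rightarrow> ('t, 'c) path set" where
  "P0 Lp X Sel 0 = {[]}"
| "P0 Lp X Sel (Suc k) = (\<Union>u. fst ((step Lp X Sel k ^^ u) (P0 Lp X Sel k, {})))"

definition Pku :: "'t list set \<Rightarrow> (nat \<Rightarrow> ('t, 'c) token set) \<Rightarrow> ('t, 'c) selector \<Rightarrow> nat \<Rightarrow> nat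
    \<Rightarrow> ('t, 'c) path set" where
  "Pku Lp X Sel k u = fst ((step Lp X Sel k ^^ u) (P0 Lp X Sel k, {}))"

definition Zku :: "'t list set \<Rightarrow> (nat \<Rightarrow> ('t, 'c) token set) \<Rightarrow> ('t, 'c) selector \<Rightarrow> nat \<Rightarrow> nat
    \<Rightarrow> ('t, 'c) token set" where
  "Zku Lp X Sel k u = snd ((step Lp X Sel k ^^ u) (P0 Lp X Sel k, {}))"

definition Pinf :: "'t list set \<Rightarrow> (nat \<Rightarrow> ('t, 'c) token set) \<Rightarrow> ('t, 'c) selector \<Rightarrow> nat
    \<Rightarrow> ('t, 'c) path set" where
  "Pinf Lp X Sel k = (\<Union>u. Pku Lp X Sel k u)"

definition Zinf :: "'t list set \<Rightarrow> (nat \<Rightarrow> ('t, 'c) token set) \<Rightarrow> ('t, 'c) selector \<Rightarrow> nat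
    \<Rightarrow> ('t, 'c) token set" where
  "Zinf Lp X Sel k = (\<Union>u. Zku Lp X Sel k u)"

definition Z_infty :: "'t set \<Rightarrow> ('n, 't) rule set \<Rightarrow> 'n \<Rightarrow> 'c set \<Rightarrow> ('t, 'c) lexer
    \<Rightarrow> ('t, 'c) selector \<Rightarrow> 'c list \<Rightarrow> nat \<Rightarrow> ('t, 'c) token set" where
  "Z_infty \<TT> \<RR> \<SS> \<Sigma> Lex Sel D k = Zinf (L_prefix \<TT> \<RR> \<SS>) (Xk \<TT> \<Sigma> Lex D) Sel k"

definition PP :: "'t set \<Rightarrow> ('n, 't) rule set \<Rightarrow> 'n \<Rightarrow> 'c set \<Rightarrow> ('t, 'c) lexer
    \<Rightarrow> ('t, 'c) selector \<Rightarrow> 'c list \<Rightarrow> ('t, 'c) path set" where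
  "PP \<TT> \<RR> \<SS> \<Sigma> Lex Sel D = Pinf (L_prefix \<TT> \<RR> \<SS>) (Xk \<TT> \<Sigma> Lex D) Sel (length D)"

end

theory Submission
  imports Defs
begin

lemma Pku_Suc: "Pku Lp X Sel k (Suc u) = limit (Append Lp k (Zku Lp X Sel k (Suc u))) (Pku Lp X Sel k u)"
  and Zku_Suc: "Zku Lp X Sel k (Suc u) = Sel (Zku Lp X Sel k u) (Wk Lp (X k) k (Pku Lp X Sel k u))"
  by (simp_all add: Pku_def Zku_def step_def Let_def)

lemma Pku_0: "Pku Lp X Sel k 0 = P0 Lp X Sel k" and Zku_0: "Zku Lp X Sel k 0 = {}"
  by (simp_all add: Pku_def Zku_def)

lemma limit_sub: "X \<subseteq> limit f X"
  unfolding limit_def by (metis (no_types) UN_upper UNIV_I funpow_0)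

lemma Pku_mono_Suc: "Pku Lp X Sel k u \<subseteq> Pku Lp X Sel k (Suc u)"
  using Pku_Suc limit_sub by metis

lemma Pku_mono: "u \<le> v \<Longrightarrow> Pku Lp X Sel k u \<subseteq> Pku Lp X Sel k v"
  by (induction v rule: dec_induct) (auto dest: subsetD[OF Pku_mono_Suc])

lemma Wk_mono: "P \<subseteq> Q \<Longrightarrow> Wk Lp Y k P \<subseteq> Wk Lp Y k Q"
  unfolding Wk_def by blast

lemma Zku_W:
  assumes sel: "is_selector T \<Sigma> Sel" and X: "X k \<subseteq> T \<times> lists \<Sigma>"
  shows "Zku Lp X Sel k u \<subseteq> Wk Lp (X k) k (Pku Lp X Sel k u)"
proof (induction u)
  case 0 then show ?case by (simp add: Zku_0)
next
  case (Suc u)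
  have B: "Wk Lp (X k) k (Pku Lp X Sel k u) \<subseteq> T \<times> lists \<Sigma>" using X unfolding Wk_def by blast
  have "Zku Lp X Sel k (Suc u) \<subseteq> Wk Lp (X k) k (Pku Lp X Sel k u)"
    using sel B Suc unfolding is_selector_def Zku_Suc by blast
  also have "\<dots> \<subseteq> Wk Lp (X k) k (Pku Lp X Sel k (Suc u))" by (rule Wk_mono[OF Pku_mono_Suc])
  finally show ?case .
qed

lemma Zku_mono_Suc:
  assumes sel: "is_selector T \<Sigma> Sel" and X: "X k \<subseteq> T \<times> lists \<Sigma>"
  shows "Zku Lp X Sel k u \<subseteq> Zku Lp X Sel k (Suc u)"
proof -
  have B: "Wk Lp (X k) k (Pku Lp X Sel k u) \<subseteq> T \<times> lists \<Sigma>" using X unfolding Wk_def by blast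
  show ?thesis using sel B Zku_W[where X=X and k=k and Lp=Lp and u=u, OF sel X] unfolding is_selector_def Zku_Suc by blast
qed

lemma Zku_mono:
  assumes sel: "is_selector T \<Sigma> Sel" and X: "X k \<subseteq> T \<times> lists \<Sigma>"
  shows "u \<le> v \<Longrightarrow> Zku Lp X Sel k u \<subseteq> Zku Lp X Sel k v"
  by (induction v rule: dec_induct) (auto dest: subsetD[OF Zku_mono_Suc[where X=X and k=k and Lp=Lp, OF sel X]])

lemma P0_Pinf: "P0 Lp X Sel k \<subseteq> Pinf Lp X Sel k"
  unfolding Pinf_def using Pku_0 by (metis UN_upper UNIV_I)

lemma Pinf_Suc: "Pinf Lp X Sel k \<subseteq> Pinf Lp X Sel (Suc k)"
proof -
  have "Pinf Lp X Sel k = P0 Lp X Sel (Suc k)" by (simp add: Pinf_def Pku_def)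
  then show ?thesis using P0_Pinf by metis
qed

lemma Pinf_mono: "k \<le> n \<Longrightarrow> Pinf Lp X Sel k \<subseteq> Pinf Lp X Sel n"
  by (induction n rule: dec_induct) (auto dest: subsetD[OF Pinf_Suc])

lemma Lp_nil: "[] \<in> L_prefix T R S"
  unfolding L_prefix_def derives_def by auto

lemma Lp_prefix: "q @ [t] \<in> L_prefix T R S \<Longrightarrow> q \<in> L_prefix T R S"
  unfolding L_prefix_def by auto

lemma chars_take_le: "length (chars (take i p)) \<le> length (chars p)"
proof -
  have "chars p = chars (take i p) @ chars (drop i p)"
    unfolding chars_def by (metis concat_append map_append append_take_drop_id)
  then show ?thesis by (metis le_add1 length_append)
qed

definition Inv where
  "Inv Lp X Sel n p \<longleftrightarrow> terms p \<in> Lp \<and> (\<forall>i<length p. length (chars (take i p)) \<le> n \<and>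
     p ! i \<in> Zinf Lp X Sel (length (chars (take i p))))"

lemma Inv_mono: "Inv Lp X Sel n p \<Longrightarrow> n \<le> m \<Longrightarrow> Inv Lp X Sel m p"
  unfolding Inv_def by force

lemma Inv_append:
  assumes "Inv Lp X Sel n p" "length (chars p) = n" "t \<in> Zinf Lp X Sel n" "terms (p @ [t]) \<in> Lp"
  shows "Inv Lp X Sel n (p @ [t])"
  unfolding Inv_def
proof (rule conjI[rotated], intro allI impI)
  show "terms (p @ [t]) \<in> Lp" by fact
  fix i assume i: "i < length (p @ [t])"
  show "length (chars (take i (p @ [t]))) \<le> n \<and>
     (p @ [t]) ! i \<in> Zinf Lp X Sel (length (chars (take i (p @ [t]))))"
  proof (cases "i < length p")
    case True
    have "length (chars (take i p)) \<le> n \<and> p ! i \<in> Zinf Lp X Sel (length (chars (take i p)))"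
      using assms(1) True unfolding Inv_def by blast
    then show ?thesis using True by (simp add: nth_append)
  next
    case False then have "i = length p" using i by simp
    then show ?thesis using assms by simp
  qed
qed

lemma limit_Inv:
  assumes "\<forall>p\<in>P. Inv Lp X Sel n p" and "Z \<subseteq> Zinf Lp X Sel n"
  shows "\<forall>p\<in>limit (Append Lp n Z) P. Inv Lp X Sel n p"
proof -
  have "\<forall>p\<in>(Append Lp n Z ^^ m) P. Inv Lp X Sel n p" for m
  proof (induction m)
    case 0 then show ?case using assms by simp
  next
    case (Suc m)
    then show ?case unfolding funpow.simps comp_def Append_def
      using Inv_append assms(2) by blast
  qed
  then show ?thesis unfolding limit_def by blast
qed

lemma Zku_Zinf: "Zku Lp X Sel k u \<subseteq> Zinf Lp X Sel k"
  unfolding Zinf_def by blast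

lemma Pku_Inv: assumes "[] \<in> Lp" shows "\<forall>u. \<forall>p\<in>Pku Lp X Sel n u. Inv Lp X Sel n p"
proof (induction n)
  case 0
  show ?case
  proof
    fix u show "\<forall>p\<in>Pku Lp X Sel 0 u. Inv Lp X Sel 0 p"
    proof (induction u)
      case 0 then show ?case using assms by (simp add: Pku_0 Inv_def terms_def)
    next
      case (Suc u) then show ?case unfolding Pku_Suc using limit_Inv Zku_Zinf by metis
    qed
  qed
next
  case (Suc n)
  show ?case
  proof
    fix u show "\<forall>p\<in>Pku Lp X Sel (Suc n) u. Inv Lp X Sel (Suc n) p"
    proof (induction u)
      case 0
      have "Pku Lp X Sel (Suc n) 0 = (\<Union>u. Pku Lp X Sel n u)" by (simp add: Pku_0 Pku_def)
      then show ?case using Suc.IH Inv_mono[of Lp X Sel n _ "Suc n"] by auto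
    next
      case (Suc u) then show ?case unfolding Pku_Suc using limit_Inv Zku_Zinf by metis
    qed
  qed
qed

theorem theorem4:
  fixes \<NN> :: "'n set" and \<TT> :: "'t set" and \<RR> :: "('n, 't) rule set" and \<SS> :: 'n
    and \<Sigma> :: "'c set" and Lex :: "('t, 'c) lexer" and Sel :: "('t, 'c) selector"
    and D :: "'c list" and p :: "('t, 'c) path"
  assumes "wf_grammar \<NN> \<TT> \<RR> \<SS>"
    and "local_lexing \<TT> \<Sigma> Lex Sel"
    and "D \<in> lists \<Sigma>"
  shows "p \<in> PP \<TT> \<RR> \<SS> \<Sigma> Lex Sel D \<longleftrightarrow>
           ((\<forall>i<length p. length (chars (take i p)) \<le> length D \<and>
               p ! i \<in> Z_infty \<TT> \<RR> \<SS> \<Sigma> Lex Sel D (length (chars (take i p))))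
            \<and> terms p \<in> L_prefix \<TT> \<RR> \<SS>)"
proof -
  define Lp where "Lp = L_prefix \<TT> \<RR> \<SS>"
  define X where "X = Xk \<TT> \<Sigma> Lex D"
  have sel: "is_selector \<TT> \<Sigma> Sel" using assms(2) unfolding local_lexing_def by simp
  have Xs: "\<And>k. X k \<subseteq> \<TT> \<times> lists \<Sigma>" unfolding X_def Xk_def by blast
  have eq: "?thesis \<longleftrightarrow> (p \<in> Pinf Lp X Sel (length D) \<longleftrightarrow> Inv Lp X Sel (length D) p)"
    unfolding PP_def Z_infty_def Inv_def Lp_def X_def by blast
  have fwd: "Inv Lp X Sel (length D) p" if "p \<in> Pinf Lp X Sel (length D)"
    using that Pku_Inv[OF Lp_nil[of \<TT> \<RR> \<SS>, folded Lp_def]] unfolding Pinf_def by blast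
  have bwd: "\<forall>n. Inv Lp X Sel n q \<longrightarrow> q \<in> Pinf Lp X Sel n" for q
  proof (induction q rule: rev_induct)
    case Nil
    show ?case
    proof (intro allI impI)
      fix n
      have "[] \<in> Pinf Lp X Sel 0" using P0_Pinf by fastforce
      then show "[] \<in> Pinf Lp X Sel n" using Pinf_mono[of 0 n] by blast
    qed
  next
    case (snoc t q)
    show ?case
    proof (intro allI impI)
      fix n assume I: "Inv Lp X Sel n (q @ [t])"
      define k where "k = length (chars q)"
      have tl: "terms (q @ [t]) \<in> Lp" using I unfolding Inv_def by blast
      have "terms q \<in> Lp" using tl unfolding Lp_def terms_def by (simp add: Lp_prefix)
      have kn: "k \<le> n" and tZ: "t \<in> Zinf Lp X Sel k"
        using I unfolding Inv_def k_def by (auto dest: spec[of _ "length q"])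
      have "Inv Lp X Sel k q" unfolding Inv_def
      proof (rule conjI[rotated], intro allI impI)
        show "terms q \<in> Lp" by fact
        fix i assume i: "i < length q"
        have "length (chars (take i q)) \<le> k" unfolding k_def by (rule chars_take_le)
        moreover have "q ! i \<in> Zinf Lp X Sel (length (chars (take i q)))"
          proof -
          have "i < length (q @ [t])" using i by simp
          then have "(q @ [t]) ! i \<in> Zinf Lp X Sel (length (chars (take i (q @ [t]))))"
            using I unfolding Inv_def by blast
          then show ?thesis using i by (simp add: nth_append)
        qed
        ultimately show "length (chars (take i q)) \<le> k \<and> q ! i \<in> Zinf Lp X Sel (length (chars (take i q)))"
          by blast
      qed
      then have "q \<in> Pinf Lp X Sel k" using snoc.IH by blast
      then obtain u1 where u1: "q \<in> Pku Lp X Sel k u1" unfolding Pinf_def by blast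
      obtain u2 where u2: "t \<in> Zku Lp X Sel k u2" using tZ unfolding Zinf_def by blast
      define u where "u = max u1 u2"
      have q: "q \<in> Pku Lp X Sel k u" using u1 Pku_mono[of u1 u Lp X Sel k] unfolding u_def by auto
      have t: "t \<in> Zku Lp X Sel k (Suc u)" using u2 Zku_mono[where X=X and k=k and Lp=Lp, OF sel Xs[of k], of u2 "Suc u"] unfolding u_def by (meson max.cobounded2 le_SucI subsetD)
      have "q @ [t] \<in> Append Lp k (Zku Lp X Sel k (Suc u)) (Pku Lp X Sel k u)"
        unfolding Append_def using q t tl k_def by blast
      then have "q @ [t] \<in> Pku Lp X Sel k (Suc u)" unfolding Pku_Suc limit_def
        by (metis (no_types, lifting) UN_iff UNIV_I funpow_0 funpow_Suc_right comp_def)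
      then have "q @ [t] \<in> Pinf Lp X Sel k" unfolding Pinf_def by blast
      then show "q @ [t] \<in> Pinf Lp X Sel n" using Pinf_mono[OF kn] by blast
    qed
  qed
  show ?thesis using eq fwd bwd by blast
qed

end
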